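(* Let $P_0,P_1,P_2\in\mathbb H$ be distinct and suppose that $P_0P_1P_2$ is not equilateral (i.e. not $\langle P_0,P_1\rangle=\langle P_1,P_2\rangle=\langle P_2,P_0\rangle$). Let $\varepsilon\in\{-1,1\}$ and for $i\in\mathbb Z/3\mathbb Z$ let $$R_i:=\frac{\sqrt{1-2\langle P_{i+1},P_{i+2}\rangle}(P_{i+1}+P_{i+2})+\varepsilon P_{i+1}\tilde\times P_{i+2}}{\sqrt3(1-\langle P_{i+1},P_{i+2}\rangle)}.$$ Let $\alpha:=-1+\langle P_0,P_1\rangle+\langle P_1,P_2\rangle+\langle P_2,P_0\rangle$, $\chi:=\langle P_0\tilde\times P_1,P_2\rangle$ and $d_i:=\sqrt{1-2\langle P_{i+1},P_{i+2}\rangle}$. Then $R_0R_1R_2$ is equilateral (i.e. $\langle R_0,R_1\rangle=\langle R_1,R_2\rangle=\langle R_2,R_0\rangle$) if and only if $$\alpha(d_0+d_1+d_2-d_0d_1d_2)+\varepsilon\chi(1-d_0d_1-d_1d_2-d_2d_0)=0.$$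
   Context: $\langle v,w\rangle=-v_1w_1+v_2w_2+v_3w_3$ on $\mathbb R^3$; $\mathbb H=\{P\in\mathbb R^3:\langle P,P\rangle=-1,\ P_1\ge1\}$; $v\tilde\times w:=J(v\times w)$ with $J=\mathrm{diag}(-1,1,1)$ and $\times$ the Euclidean cross product. Indices are in $\mathbb Z/3\mathbb Z$. *)

theory Defs
  imports "HOL-Analysis.Analysis" "HOL-Analysis.Cross3"
begin

unbundle cross3_syntax

text \<open>Vectors in R^3 are real^3 with components x$1, x$2, x$3.
  Indices Z/3Z are modelled by the numeral type 3 (arithmetic mod 3).\<close>

definition lor :: "real^3 \<Rightarrow> real^3 \<Rightarrow> real" where
  "lor v w = - (v$1 * w$1) + v$2 * w$2 + v$3 * w$3"

definition Jmap :: "real^3 \<Rightarrow> real^3" where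
  "Jmap v = vector [- (v$1), v$2, v$3]"

definition lcross :: "real^3 \<Rightarrow> real^3 \<Rightarrow> real^3" where
  "lcross v w = Jmap (v \<times> w)"

definition hyperboloid :: "(real^3) set" where
  "hyperboloid = {P. lor P P = -1 \<and> P$1 \<ge> 1}"

definition equilateral3 :: "(3 \<Rightarrow> real^3) \<Rightarrow> bool" where
  "equilateral3 Q \<longleftrightarrow> lor (Q 0) (Q 1) = lor (Q 1) (Q 2) \<and> lor (Q 1) (Q 2) = lor (Q 2) (Q 0)"

end

theory Submission imports Defs begin
lemma lor_sym: "lor u v = lor v u" unfolding lor_def by simp
lemma lor_add1: "lor (u + v) w = lor u w + lor v w" unfolding lor_def by (simp add: algebra_simps)
lemma lor_add2: "lor w (u + v) = lor w u + lor w v" unfolding lor_def by (simp add: algebra_simps)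
lemma lor_scale1: "lor (c *\<^sub>R u) w = c * lor u w" unfolding lor_def by (simp add: algebra_simps)
lemma lor_scale2: "lor w (c *\<^sub>R u) = c * lor w u" unfolding lor_def by (simp add: algebra_simps)
lemma lcross_lor: "lor (lcross u v) w = (u \<times> v) \<bullet> w"
  unfolding lor_def lcross_def Jmap_def inner_vec_def sum_3 by simp
lemma lcross_cyc: "lor (lcross u v) w = lor (lcross v w) u"
  unfolding lcross_lor by (simp add: cross3_simps inner_vec_def sum_3 algebra_simps)
lemma lcross_self1: "lor (lcross u v) u = 0"
  unfolding lcross_lor by (simp add: cross3_simps inner_vec_def sum_3 algebra_simps)
lemma lcross_self2: "lor (lcross u v) v = 0"
  unfolding lcross_lor by (simp add: cross3_simps inner_vec_def sum_3 algebra_simps)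
lemma lcross_lcross: "lor (lcross u v) (lcross w z) = lor u z * lor v w - lor u w * lor v z"
  unfolding lor_def lcross_def Jmap_def by (simp add: cross3_simps)

lemma hyp_le: assumes "P \<in> hyperboloid" "Q \<in> hyperboloid" shows "lor P Q \<le> -1"
proof -
  have P: "- (P$1 * P$1) + P$2 * P$2 + P$3 * P$3 = -1" "P$1 \<ge> 1"
    using assms(1) unfolding hyperboloid_def lor_def by auto
  have Q: "- (Q$1 * Q$1) + Q$2 * Q$2 + Q$3 * Q$3 = -1" "Q$1 \<ge> 1"
    using assms(2) unfolding hyperboloid_def lor_def by auto
  define p1 where "p1 = P$1" define p2 where "p2 = P$2" define p3 where "p3 = P$3"
  define q1 where "q1 = Q$1" define q2 where "q2 = Q$2" define q3 where "q3 = Q$3"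
  have p: "p1*p1 = 1 + p2*p2 + p3*p3" "p1 \<ge> 1" using P unfolding p1_def p2_def p3_def by linarith+
  have q: "q1*q1 = 1 + q2*q2 + q3*q3" "q1 \<ge> 1" using Q unfolding q1_def q2_def q3_def by linarith+
  define u where "u = p2*q2 + p3*q3"
  have "p1*q1 \<ge> 1 + u"
  proof (cases "1 + u \<le> 0")
    case True
    have "1*1 \<le> p1*q1" using p q by (intro mult_mono) auto
    then show ?thesis using True by simp
  next
    case False
    have "(p1*q1)*(p1*q1) = (p1*p1)*(q1*q1)" by (simp add: algebra_simps)
    also have "\<dots> = (1 + p2*p2 + p3*p3)*(1 + q2*q2 + q3*q3)" using p q by simp
    also have "\<dots> = (1+u)*(1+u) + (p2-q2)*(p2-q2) + (p3-q3)*(p3-q3) + (p2*q3-p3*q2)*(p2*q3-p3*q2)"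
      unfolding u_def by (simp add: algebra_simps)
    finally have "(1+u)*(1+u) \<le> (p1*q1)*(p1*q1)" by simp
    moreover have "p1*q1 \<ge> 0" using p q by simp
    ultimately show ?thesis using False by (metis power2_eq_square power2_le_imp_le)
  qed
  then show ?thesis unfolding lor_def u_def p1_def p2_def p3_def q1_def q2_def q3_def by simp
qed

lemma pair_lemma:
  assumes "lor Y Y = -1" "lor Z Z = -1" "e * e = 1"
  shows "lor (k1 *\<^sub>R (dA *\<^sub>R (Y+Z) + e *\<^sub>R lcross Y Z)) (k2 *\<^sub>R (dB *\<^sub>R (Z+X) + e *\<^sub>R lcross Z X))
    = k1*k2*(dA*dB*(lor Y Z + lor X Y + lor Z X - 1) + e*lor (lcross X Y) Z*(dA+dB) - lor X Y - lor Y Z * lor Z X)"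
proof -
  have c1: "lor Y (lcross Z X) = lor (lcross X Y) Z" "lor (lcross Y Z) X = lor (lcross X Y) Z"
    by (metis lor_sym lcross_cyc)+
  have c2: "lor Z (lcross Z X) = 0" "lor (lcross Y Z) Z = 0"
    by (metis lor_sym lcross_self1 lcross_self2)+
  have c3: "lor (lcross Y Z) (lcross Z X) = lor Y X * lor Z Z - lor Y Z * lor Z X"
    by (rule lcross_lcross)
  show ?thesis
    unfolding lor_scale1 lor_scale2 lor_add1 lor_add2 c1 c2 c3
    using assms lor_sym[of Y X] lor_sym[of Z Y] lor_sym[of X Z] lor_sym[of Z X] lor_sym[of Y Z]
    by algebra
qed

lemma key1:
  fixes d0 d1 d2 a0 a1 a2 e x :: real
  assumes "a0 = (1-d0^2)/2" "a1 = (1-d1^2)/2" "a2 = (1-d2^2)/2"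
  shows "(1-a2)*(d0*d1*(a0+a2+a1-1) + e*x*(d0+d1) - a2 - a0*a1) - (1-a0)*(d1*d2*(a1+a0+a2-1) + e*x*(d1+d2) - a0 - a1*a2)
     = (d0-d2)/2 * ((-1+a2+a0+a1)*(d0+d1+d2-d0*d1*d2) + e*x*(1-d0*d1-d1*d2-d2*d0))"
  unfolding assms by (simp add: field_simps power2_eq_square)

lemma kk: "1/(sqrt 3 * p) * (1/(sqrt 3 * q)) * n = n/(3*(p*q))" for p q n :: real
proof -
  have "1/(sqrt 3 * p) * (1/(sqrt 3 * q)) = 1/((sqrt 3 * sqrt 3) * (p*q))" by (simp add: algebra_simps)
  then show ?thesis by simp
qed

lemma idx3: "(0::3)+1 = 1" "(0::3)+2=2" "(1::3)+1 = 2" "(1::3)+2 = 0" "(2::3)+1 = 0" "(2::3)+2=1"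
  by simp_all

theorem corollary4p2:
  fixes P :: "3 \<Rightarrow> real^3" and \<epsilon> :: real
  assumes "\<And>i. P i \<in> hyperboloid"
    and "inj P"
    and "\<not> equilateral3 P"
    and "\<epsilon> \<in> {-1, 1}"
  shows "let d = (\<lambda>i. sqrt (1 - 2 * lor (P (i+1)) (P (i+2))));
             R = (\<lambda>i. (1 / (sqrt 3 * (1 - lor (P (i+1)) (P (i+2))))) *\<^sub>R
                     (d i *\<^sub>R (P (i+1) + P (i+2)) + \<epsilon> *\<^sub>R lcross (P (i+1)) (P (i+2))));
             \<alpha> = -1 + lor (P 0) (P 1) + lor (P 1) (P 2) + lor (P 2) (P 0);
             chi = lor (lcross (P 0) (P 1)) (P 2)
         in equilateral3 R \<longleftrightarrow>
            \<alpha> * (d 0 + d 1 + d 2 - d 0 * d 1 * d 2)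
              + \<epsilon> * chi * (1 - d 0 * d 1 - d 1 * d 2 - d 2 * d 0) = 0"
proof -
  have hyp: "lor (P i) (P i) = -1" for i using assms(1) unfolding hyperboloid_def by auto
  have ee: "\<epsilon> * \<epsilon> = 1" using assms(4) by auto
  define a0 where "a0 = lor (P 1) (P 2)"
  define a1 where "a1 = lor (P 2) (P 0)"
  define a2 where "a2 = lor (P 0) (P 1)"
  define x where "x = lor (lcross (P 0) (P 1)) (P 2)"
  have x1: "lor (lcross (P 1) (P 2)) (P 0) = x" "lor (lcross (P 2) (P 0)) (P 1) = x"
    unfolding x_def by (metis lcross_cyc)+
  have le: "a0 \<le> -1" "a1 \<le> -1" "a2 \<le> -1" unfolding a0_def a1_def a2_def using hyp_le assms(1) by auto
  define d0 where "d0 = sqrt (1 - 2*a0)"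
  define d1 where "d1 = sqrt (1 - 2*a1)"
  define d2 where "d2 = sqrt (1 - 2*a2)"
  have ad: "a0 = (1-d0^2)/2" "a1 = (1-d1^2)/2" "a2 = (1-d2^2)/2"
  proof -
    have ge: "1-2*a0 \<ge> 0" "1-2*a1 \<ge> 0" "1-2*a2 \<ge> 0" using le by auto
    show "a0 = (1-d0^2)/2" "a1 = (1-d1^2)/2" "a2 = (1-d2^2)/2"
      unfolding d0_def d1_def d2_def
      using real_sqrt_pow2[OF ge(1)] real_sqrt_pow2[OF ge(2)] real_sqrt_pow2[OF ge(3)] by simp_all
  qed
  have c: "1 - a0 > 0" "1 - a1 > 0" "1 - a2 > 0" using le by auto
  have neq: "\<not> (a2 = a0 \<and> a0 = a1)" using assms(3) unfolding equilateral3_def a0_def a1_def a2_def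
    by (metis lor_sym)
  define F where "F = (-1 + a2 + a0 + a1) * (d0 + d1 + d2 - d0*d1*d2) + \<epsilon>*x*(1 - d0*d1 - d1*d2 - d2*d0)"
  define N01 where "N01 = d0*d1*(a0 + a2 + a1 - 1) + \<epsilon>*x*(d0+d1) - a2 - a0*a1"
  define N12 where "N12 = d1*d2*(a1 + a0 + a2 - 1) + \<epsilon>*x*(d1+d2) - a0 - a1*a2"
  define N20 where "N20 = d2*d0*(a2 + a1 + a0 - 1) + \<epsilon>*x*(d2+d0) - a1 - a2*a0"
  have id1: "(1-a2)*N01 - (1-a0)*N12 = (d0-d2)/2 * F"
    unfolding N01_def N12_def F_def by (rule key1[OF ad])
  have Frot: "F = (-1+a0+a1+a2)*(d1+d2+d0-d1*d2*d0) + \<epsilon>*x*(1-d1*d2-d2*d0-d0*d1)"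
    unfolding F_def by (simp add: algebra_simps)
  have id2: "(1-a0)*N12 - (1-a1)*N20 = (d1-d0)/2 * F"
    unfolding N12_def N20_def Frot by (rule key1[OF ad(2) ad(3) ad(1)])
  have s3: "sqrt 3 * sqrt 3 = (3::real)" by simp
  have e01: "lor ((1 / (sqrt 3 * (1 - a0))) *\<^sub>R (d0 *\<^sub>R (P 1 + P 2) + \<epsilon> *\<^sub>R lcross (P 1) (P 2)))
                 ((1 / (sqrt 3 * (1 - a1))) *\<^sub>R (d1 *\<^sub>R (P 2 + P 0) + \<epsilon> *\<^sub>R lcross (P 2) (P 0)))
        = N01 / (3 * ((1-a0)*(1-a1)))"
    unfolding pair_lemma[OF hyp hyp ee] kk N01_def a0_def[symmetric] a1_def[symmetric] a2_def[symmetric] x_def[symmetric]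
    by (rule refl)
  have e12: "lor ((1 / (sqrt 3 * (1 - a1))) *\<^sub>R (d1 *\<^sub>R (P 2 + P 0) + \<epsilon> *\<^sub>R lcross (P 2) (P 0)))
                 ((1 / (sqrt 3 * (1 - a2))) *\<^sub>R (d2 *\<^sub>R (P 0 + P 1) + \<epsilon> *\<^sub>R lcross (P 0) (P 1)))
        = N12 / (3 * ((1-a1)*(1-a2)))"
    unfolding pair_lemma[OF hyp hyp ee] kk N12_def a0_def[symmetric] a1_def[symmetric] a2_def[symmetric] x1
    by (rule refl)
  have e20: "lor ((1 / (sqrt 3 * (1 - a2))) *\<^sub>R (d2 *\<^sub>R (P 0 + P 1) + \<epsilon> *\<^sub>R lcross (P 0) (P 1)))
                 ((1 / (sqrt 3 * (1 - a0))) *\<^sub>R (d0 *\<^sub>R (P 1 + P 2) + \<epsilon> *\<^sub>R lcross (P 1) (P 2)))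
        = N20 / (3 * ((1-a2)*(1-a0)))"
    unfolding pair_lemma[OF hyp hyp ee] kk N20_def a0_def[symmetric] a1_def[symmetric] a2_def[symmetric] x1
    by (rule refl)
  have eq1: "N01 / (3 * ((1-a0)*(1-a1))) = N12 / (3 * ((1-a1)*(1-a2))) \<longleftrightarrow> (d0-d2) * F = 0"
  proof -
    have "N01 / (3 * ((1-a0)*(1-a1))) = N12 / (3 * ((1-a1)*(1-a2))) \<longleftrightarrow>
          N01 * (3 * ((1-a1)*(1-a2))) = N12 * (3 * ((1-a0)*(1-a1)))"
      using c by (intro frac_eq_eq) auto
    also have "\<dots> \<longleftrightarrow> 3*(1-a1)*((1-a2)*N01 - (1-a0)*N12) = 0"
      by (simp add: algebra_simps)
    also have "\<dots> \<longleftrightarrow> (1-a2)*N01 - (1-a0)*N12 = 0" using c by simp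
    finally have "N01 / (3 * ((1-a0)*(1-a1))) = N12 / (3 * ((1-a1)*(1-a2))) \<longleftrightarrow> (1-a2)*N01 - (1-a0)*N12 = 0" .
    then show ?thesis using id1 by simp
  qed
  have eq2: "N12 / (3 * ((1-a1)*(1-a2))) = N20 / (3 * ((1-a2)*(1-a0))) \<longleftrightarrow> (d1-d0) * F = 0"
  proof -
    have "N12 / (3 * ((1-a1)*(1-a2))) = N20 / (3 * ((1-a2)*(1-a0))) \<longleftrightarrow>
          N12 * (3 * ((1-a2)*(1-a0))) = N20 * (3 * ((1-a1)*(1-a2)))"
      using c by (intro frac_eq_eq) auto
    also have "\<dots> \<longleftrightarrow> 3*(1-a2)*((1-a0)*N12 - (1-a1)*N20) = 0"
      by (simp add: algebra_simps)
    also have "\<dots> \<longleftrightarrow> (1-a0)*N12 - (1-a1)*N20 = 0" using c by simp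
    finally have "N12 / (3 * ((1-a1)*(1-a2))) = N20 / (3 * ((1-a2)*(1-a0))) \<longleftrightarrow> (1-a0)*N12 - (1-a1)*N20 = 0" .
    then show ?thesis using id2 by simp
  qed
  have main: "(N01 / (3 * ((1-a0)*(1-a1))) = N12 / (3 * ((1-a1)*(1-a2))) \<and>
              N12 / (3 * ((1-a1)*(1-a2))) = N20 / (3 * ((1-a2)*(1-a0)))) \<longleftrightarrow> F = 0"
    unfolding eq1 eq2
  proof
    assume h: "(d0 - d2) * F = 0 \<and> (d1 - d0) * F = 0"
    show "F = 0"
    proof (rule ccontr)
      assume "F \<noteq> 0"
      then have "d0 = d2" "d1 = d0" using h by auto
      then have "a2 = a0 \<and> a0 = a1" using ad by simp
      then show False using neq by blast
    qed
  qed simp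
  show ?thesis
    unfolding Let_def equilateral3_def idx3
    unfolding a0_def[symmetric] a1_def[symmetric] a2_def[symmetric] x_def[symmetric]
      d0_def[symmetric] d1_def[symmetric] d2_def[symmetric]
    unfolding e01 e12 e20 main F_def by (rule refl)
qed

end
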